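(* Consider the discrete-time $Geo^X/G_r^{(a,b)}/1$ queue with single ($\delta=0$) or multiple ($\delta=1$) vacations described in the context, with $\rho<1$, and let $p^+_{n,r}$, $p^+_n$, $Q^+_n$ be its departure/vacation-termination-epoch probabilities. Let $P^+(x,y)=\sum_{n\ge0}\sum_{r=a}^bp^+_{n,r}x^ny^r$. Then for all complex $x,y$ with $|x|\le1$, $|y|\le1$ and $x^b\neq K^{(b)}(x)$, $$P^+(x,y)=\frac{N(x,y)}{x^b-K^{(b)}(x)},$$ where $$\begin{aligned}N(x,y)=&\sum_{n=0}^{a-1}p^+_nx^n\{H(x)-1\}y^bK^{(b)}(x)+\sum_{n=0}^{a-1}Q^+_n\Big[x^n\{\delta H(x)-1\}y^bK^{(b)}(x)\\&+(1-\delta)\sum_{j=n}^{a-1}e_{j,n}\Big(\sum_{i=a}^bg_{i-j}K^{(i)}(x)\big\{(x^b-K^{(b)}(x))y^i+y^bK^{(b)}(x)\big\}+\sum_{i=b+1-j}^\infty g_ix^{i+j}y^bK^{(b)}(x)\Big)\Big]\\&+\sum_{n=a}^{b-1}(p^+_n+Q^+_n)\Big[K^{(b)}(x)K^{(n)}(x)(y^b-y^n)+K^{(n)}(x)x^by^n-K^{(b)}(x)x^ny^b\Big].\end{aligned}$$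
   Context: Time is slotted. Fix integers $1\le a\le b$, $\lambda\in(0,1)$, $\bar\lambda=1-\lambda$, and a group-size distribution $(g_m)_{m\ge1}$ with finite mean $\bar g$ and pgf $G(z)=\sum_{m\ge1}g_mz^m$; $g_m=0$ for $m\le0$. In each slot a group arrives with probability $\lambda$, with size distribution $(g_m)$. Service follows the $(a,b)$ bulk rule (start only if at least $a$ wait; take all if $a\le r\le b$ wait, exactly $b$ if more than $b$ wait). A batch of size $r$ ($a\le r\le b$) has service-time pmf $s_r(n)$, $n\ge1$, pgf $S_r^*(z)$, mean $s_r$, $\mu_b=1/s_b$. Vacation times have pmf $v_n$, $n\ge1$, pgf $V^*(z)$, finite mean. $\delta=0$: single vacation (server stays dormant after a vacation until $a$ wait); $\delta=1$: multiple vacations. $\rho=\lambda\bar g/(b\mu_b)<1$. Stationary probabilities $p_{n,0}$ ($0\le n\le a-1$, dormant), $p_{n,r}(u)$ ($n\ge0$ waiting, batch size $a\le r\le b$ in service, remaining service $u\ge1$), $Q_n(u)$ ($n\ge0$ waiting, on vacation, remaining vacation $u\ge1$) satisfy: (E1) $p_{0,0}=(1-\delta)[\bar\lambda p_{0,0}+\bar\lambda Q_0(1)]$; (E2) $p_{n,0}=(1-\delta)[\bar\lambda p_{n,0}+\lambda\sum_{i=1}^ng_ip_{n-i,0}+\bar\lambda Q_n(1)+\lambda\sum_{i=1}^ng_iQ_{n-i}(1)]$, $1\le n\le a-1$; (E3) $p_{0,r}(u)=\bar\lambda p_{0,r}(u+1)+s_r(u)\big[\sum_{m=a}^b(\bar\lambda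 p_{r,m}(1)+\lambda\sum_{i=1}^rg_ip_{r-i,m}(1))+\bar\lambda Q_r(1)+\lambda\sum_{i=1}^rg_iQ_{r-i}(1)+(1-\delta)\lambda\sum_{i=0}^{a-1}g_{r-i}p_{i,0}\big]$, $a\le r\le b$; (E4) $p_{n,r}(u)=\bar\lambda p_{n,r}(u+1)+\lambda\sum_{i=1}^ng_ip_{n-i,r}(u+1)$, $n\ge1$, $a\le r\le b-1$; (E5) $p_{n,b}(u)=\bar\lambda p_{n,b}(u+1)+\lambda\sum_{i=1}^ng_ip_{n-i,b}(u+1)+s_b(u)\big[\sum_{m=a}^b(\bar\lambda p_{n+b,m}(1)+\lambda\sum_{i=1}^{n+b}g_ip_{n+b-i,m}(1))+\bar\lambda Q_{n+b}(1)+\lambda\sum_{i=1}^{n+b}g_iQ_{n+b-i}(1)+(1-\delta)\lambda\sum_{i=0}^{a-1}g_{n+b-i}p_{i,0}\big]$, $n\ge1$; (E6) $Q_0(u)=\bar\lambda Q_0(u+1)+\bar\lambda(\sum_{m=a}^bp_{0,m}(1)+\delta Q_0(1))v_u$; (E7) $Q_n(u)=\bar\lambda Q_n(u+1)+\lambda\sum_{i=1}^ng_iQ_{n-i}(u+1)+v_u\big[\bar\lambda(\sum_{m=a}^bp_{n,m}(1)+\delta Q_n(1))+\lambda\sum_{i=1}^ng_i(\sum_{m=a}^bp_{n-i,m}(1)+\delta Q_{n-i}(1))\big]$, $1\le n\le a-1$; (E8) $Q_n(u)=\bar\lambda Q_n(u+1)+\lambda\sum_{i=1}^ng_iQ_{n-i}(u+1)$,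 $n\ge a$; (N) $(1-\delta)\sum_{n=0}^{a-1}p_{n,0}+\sum_{n,r,u}p_{n,r}(u)+\sum_{n,u}Q_n(u)=1$. With $\tau=\sum_{m\ge0}\sum_{r=a}^bp_{m,r}(1)+\sum_{m\ge0}Q_m(1)$: $p^+_{0,r}=\tau^{-1}\bar\lambda p_{0,r}(1)$, $p^+_{n,r}=\tau^{-1}(\bar\lambda p_{n,r}(1)+\lambda\sum_{i=1}^ng_ip_{n-i,r}(1))$ ($n\ge1$); $p^+_n=\sum_{r=a}^bp^+_{n,r}$; $Q^+_0=\tau^{-1}\bar\lambda Q_0(1)$, $Q^+_n=\tau^{-1}(\bar\lambda Q_n(1)+\lambda\sum_{i=1}^ng_iQ_{n-i}(1))$ ($n\ge1$). $K^{(r)}(x)=S_r^*(\bar\lambda+\lambda G(x))$ (pgf of the number of arriving customers during a service of a batch of size $r$), $H(x)=V^*(\bar\lambda+\lambda G(x))$ (pgf of the number of arrivals during a vacation). $e_{n,i}$ ($0\le i\le n$): $e_{n,n}=1$, $e_{n,n-1}=g_1$, $e_{n,i}=\sum_{j=i+1}^{n-1}e_{n,j}g_{j-i}+g_{n-i}$ for $0\le i\le n-2$. *)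

theory Defs
  imports "HOL-Analysis.Analysis"
begin

definition pgf :: "(nat \<Rightarrow> real) \<Rightarrow> complex \<Rightarrow> complex" where
  "pgf f z = (\<Sum>n. complex_of_real (f n) * z ^ n)"

text \<open>K^(r)(x) = S_r^*(lbar + lam G(x)); s r is the service-time pmf for batch size r.\<close>
definition Kf :: "real \<Rightarrow> (nat \<Rightarrow> real) \<Rightarrow> (nat \<Rightarrow> nat \<Rightarrow> real) \<Rightarrow> nat \<Rightarrow> complex \<Rightarrow> complex" where
  "Kf lam g s r x = pgf (s r) (complex_of_real (1 - lam) + complex_of_real lam * pgf g x)"

definition Hf :: "real \<Rightarrow> (nat \<Rightarrow> real) \<Rightarrow> (nat \<Rightarrow> real) \<Rightarrow> complex \<Rightarrow> complex" where
  "Hf lam g v x = pgf v (complex_of_real (1 - lam) + complex_of_real lam * pgf g x)"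

function ecoef :: "(nat \<Rightarrow> real) \<Rightarrow> nat \<Rightarrow> nat \<Rightarrow> real" where
  "ecoef g n i =
     (if i = n then 1
      else if i + 1 = n then g 1
      else if i < n then (\<Sum>j\<in>{i+1..n-1}. ecoef g n j * g (j - i)) + g (n - i)
      else 0)"
  by auto
termination by (relation "Wellfounded.measure (\<lambda>(g,n,i). n - i)") auto

definition tau :: "nat \<Rightarrow> nat \<Rightarrow> (nat \<Rightarrow> nat \<Rightarrow> nat \<Rightarrow> real) \<Rightarrow> (nat \<Rightarrow> nat \<Rightarrow> real) \<Rightarrow> real" where
  "tau a b p Q = (\<Sum>m. \<Sum>r=a..b. p m r 1) + (\<Sum>m. Q m 1)"

definition pplus :: "real \<Rightarrow> (nat \<Rightarrow> real) \<Rightarrow> nat \<Rightarrow> nat \<Rightarrow> (nat \<Rightarrow> nat \<Rightarrow> nat \<Rightarrow> real) \<Rightarrow> (nat \<Rightarrow> nat \<Rightarrow> real) \<Rightarrow> nat \<Rightarrow> nat \<Rightarrow> real" where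
  "pplus lam g a b p Q n r =
     ((1 - lam) * p n r 1 + lam * (\<Sum>i=1..n. g i * p (n - i) r 1)) / tau a b p Q"

definition pplusn :: "real \<Rightarrow> (nat \<Rightarrow> real) \<Rightarrow> nat \<Rightarrow> nat \<Rightarrow> (nat \<Rightarrow> nat \<Rightarrow> nat \<Rightarrow> real) \<Rightarrow> (nat \<Rightarrow> nat \<Rightarrow> real) \<Rightarrow> nat \<Rightarrow> real" where
  "pplusn lam g a b p Q n = (\<Sum>r=a..b. pplus lam g a b p Q n r)"

definition Qplus :: "real \<Rightarrow> (nat \<Rightarrow> real) \<Rightarrow> nat \<Rightarrow> nat \<Rightarrow> (nat \<Rightarrow> nat \<Rightarrow> nat \<Rightarrow> real) \<Rightarrow> (nat \<Rightarrow> nat \<Rightarrow> real) \<Rightarrow> nat \<Rightarrow> real" where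
  "Qplus lam g a b p Q n =
     ((1 - lam) * Q n 1 + lam * (\<Sum>i=1..n. g i * Q (n - i) 1)) / tau a b p Q"

end

theory Submission
  imports Defs
begin



lemma extract_sum:
  fixes f :: "nat \<Rightarrow> nat \<Rightarrow> real"
  assumes S: "(\<lambda>(n,u). f n u) summable_on (UNIV \<times> {1..})"
    and nn: "\<And>n u. u \<ge> 1 \<Longrightarrow> 0 \<le> f n u"
  shows "\<And>u. u \<ge> 1 \<Longrightarrow> summable (\<lambda>n. f n u)"
    and "(\<lambda>u. suminf (\<lambda>n. f n u)) \<longlonglongrightarrow> 0"
proof -
  have S2: "(\<lambda>(u,n). f n u) summable_on ({1..} \<times> UNIV)"
    using S by (subst (asm) summable_on_swap) (simp add: case_prod_unfold)
  have A: "(\<lambda>n. f n u) summable_on UNIV" if "u \<ge> 1" for u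
    using summable_on_SigmaD1[of "\<lambda>u n. f n u" "{1..}" "\<lambda>_. UNIV" u] S2 that by auto
  show B: "summable (\<lambda>n. f n u)" if "u \<ge> 1" for u
    using A[OF that] summable_on_UNIV_nonneg_real_iff[of "\<lambda>n. f n u"] nn[OF that] by auto
  have C: "(\<lambda>u. infsum (\<lambda>n. f n u) UNIV) summable_on {1..}"
    using summable_on_Sigma_banach[of "\<lambda>u n. f n u" "{1..}" "\<lambda>_. UNIV"] S2 by simp
  have eq: "infsum (\<lambda>n. f n u) UNIV = suminf (\<lambda>n. f n u)" if "u \<ge> 1" for u
    using has_sum_imp_sums[OF has_sum_infsum[OF A[OF that]]] by (simp add: sums_iff)
  have C2: "(\<lambda>u. suminf (\<lambda>n. f n u)) summable_on {1..}"
    using C by (rule summable_on_cong[THEN iffD1, rotated]) (simp add: eq)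
  have "{1..} = Suc ` (UNIV :: nat set)" proof (auto simp: image_iff)
    fix x :: nat assume "Suc 0 \<le> x" then show "\<exists>xa. x = Suc xa" by (intro exI[of _ "x - 1"]) simp
  qed
  then have C3: "(\<lambda>u. suminf (\<lambda>n. f n (Suc u))) summable_on UNIV"
    using C2 summable_on_reindex[of Suc UNIV "\<lambda>u. suminf (\<lambda>n. f n u)"] by (simp add: o_def)
  have nn2: "0 \<le> suminf (\<lambda>n. f n (Suc u))" for u
    using B[of "Suc u"] nn by (intro suminf_nonneg) auto
  have "summable (\<lambda>u. suminf (\<lambda>n. f n (Suc u)))"
    using summable_on_UNIV_nonneg_real_iff[of "\<lambda>u. suminf (\<lambda>n. f n (Suc u))"] C3 nn2 by simp
  then have "(\<lambda>u. suminf (\<lambda>n. f n (Suc u))) \<longlonglongrightarrow> 0" by (rule summable_LIMSEQ_zero)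
  then show "(\<lambda>u. suminf (\<lambda>n. f n u)) \<longlonglongrightarrow> 0"
    by (rule LIMSEQ_imp_Suc)
qed



lemma pgf_summ:
  fixes f :: "nat \<Rightarrow> real" and z :: complex
  assumes "summable (\<lambda>n. \<bar>f n\<bar>)" "cmod z \<le> 1"
  shows "summable (\<lambda>n. norm (complex_of_real (f n) * z ^ n))"
    and "summable (\<lambda>n. complex_of_real (f n) * z ^ n)"
    and "(\<lambda>n. complex_of_real (f n) * z ^ n) sums pgf f z"
proof -
  have le: "norm (complex_of_real (f n) * z ^ n) \<le> \<bar>f n\<bar>" for n
  proof -
    have "cmod z ^ n \<le> 1" using assms(2) by (simp add: power_le_one)
    then have "\<bar>f n\<bar> * cmod z ^ n \<le> \<bar>f n\<bar> * 1" by (intro mult_left_mono) auto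
    moreover have "norm (complex_of_real (f n) * z ^ n) = \<bar>f n\<bar> * cmod z ^ n"
      by (metis norm_mult norm_of_real norm_power)
    ultimately show ?thesis by linarith
  qed
  show S: "summable (\<lambda>n. norm (complex_of_real (f n) * z ^ n))"
    by (rule summable_comparison_test'[OF assms(1), where N=0]) (simp add: le)
  show S2: "summable (\<lambda>n. complex_of_real (f n) * z ^ n)"
    using S by (rule summable_norm_cancel)
  show "(\<lambda>n. complex_of_real (f n) * z ^ n) sums pgf f z"
    using S2 unfolding pgf_def by (rule summable_sums)
qed



lemma pgf_norm_le:
  fixes f :: "nat \<Rightarrow> real" and z :: complex
  assumes "\<And>n. 0 \<le> f n" "summable f" "cmod z \<le> 1"
  shows "cmod (pgf f z) \<le> suminf f"
proof -
  have sa: "summable (\<lambda>n. \<bar>f n\<bar>)" using assms by simp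
  note P = pgf_summ[OF sa assms(3)]
  have le: "norm (complex_of_real (f n) * z ^ n) \<le> f n" for n
  proof -
    have "cmod z ^ n \<le> 1" using assms(3) by (simp add: power_le_one)
    then have "f n * cmod z ^ n \<le> f n * 1" by (intro mult_left_mono) (auto simp: assms(1))
    moreover have "norm (complex_of_real (f n) * z ^ n) = \<bar>f n\<bar> * cmod z ^ n"
      by (metis norm_mult norm_of_real norm_power)
    moreover have "\<bar>f n\<bar> = f n" using assms(1)[of n] by simp
    ultimately show ?thesis by linarith
  qed
  have "cmod (pgf f z) \<le> (\<Sum>n. norm (complex_of_real (f n) * z ^ n))"
    unfolding pgf_def by (rule summable_norm[OF P(1)])
  also have "\<dots> \<le> suminf f" by (rule suminf_le[OF le P(1) assms(2)])
  finally show ?thesis .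
qed



lemma conv_sums:
  fixes f g :: "nat \<Rightarrow> real" and x :: complex and lam :: real
  assumes f: "summable (\<lambda>n. \<bar>f n\<bar>)" and g: "\<And>n. 0 \<le> g n" "g 0 = 0" "summable g"
    and x: "cmod x \<le> 1"
  shows "(\<lambda>n. complex_of_real ((1 - lam) * f n + lam * (\<Sum>i=1..n. g i * f (n - i))) * x ^ n) sums
          ((complex_of_real (1 - lam) + complex_of_real lam * pgf g x) * pgf f x)"
proof -
  have ga: "summable (\<lambda>n. \<bar>g n\<bar>)" using g by simp
  note PG = pgf_summ[OF ga x] and PF = pgf_summ[OF f x]
  have CP: "(\<lambda>k. \<Sum>i\<le>k. (complex_of_real (g i) * x ^ i) * (complex_of_real (f (k - i)) * x ^ (k - i)))
      sums (pgf g x * pgf f x)"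
    using Cauchy_product_sums[OF PG(1) PF(1)] unfolding pgf_def .
  have eq: "(\<Sum>i\<le>k. (complex_of_real (g i) * x ^ i) * (complex_of_real (f (k - i)) * x ^ (k - i)))
      = complex_of_real (\<Sum>i=1..k. g i * f (k - i)) * x ^ k" for k
  proof -
    have "(\<Sum>i\<le>k. (complex_of_real (g i) * x ^ i) * (complex_of_real (f (k - i)) * x ^ (k - i)))
        = (\<Sum>i\<le>k. complex_of_real (g i * f (k - i)) * x ^ k)"
      by (rule sum.cong) (auto simp: power_add[symmetric])
    also have "\<dots> = (\<Sum>i=1..k. complex_of_real (g i * f (k - i)) * x ^ k)"
    proof -
      have "{..k} = insert 0 {1..k}" by auto
      then show ?thesis using g(2) by simp
    qed
    also have "\<dots> = complex_of_real (\<Sum>i=1..k. g i * f (k - i)) * x ^ k"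
      by (simp add: sum_distrib_right)
    finally show ?thesis .
  qed
  have S1: "(\<lambda>k. complex_of_real lam * (complex_of_real (\<Sum>i=1..k. g i * f (k - i)) * x ^ k))
      sums (complex_of_real lam * (pgf g x * pgf f x))"
    using sums_mult[OF CP, of "complex_of_real lam"] by (simp add: eq)
  have S2: "(\<lambda>k. complex_of_real (1 - lam) * (complex_of_real (f k) * x ^ k)) sums (complex_of_real (1 - lam) * pgf f x)"
    by (rule sums_mult[OF PF(3)])
  have "(\<lambda>k. complex_of_real (1 - lam) * (complex_of_real (f k) * x ^ k) +
        complex_of_real lam * (complex_of_real (\<Sum>i=1..k. g i * f (k - i)) * x ^ k)) sums
        (complex_of_real (1 - lam) * pgf f x + complex_of_real lam * (pgf g x * pgf f x))"
    by (rule sums_add[OF S2 S1])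
  then show ?thesis by (simp add: algebra_simps)
qed



lemma iterate_lemma:
  fixes F :: "nat \<Rightarrow> complex" and A C :: complex and s :: "nat \<Rightarrow> real"
  assumes A: "cmod A \<le> 1" and s: "\<And>n. 0 \<le> s n" "s 0 = 0" "summable s"
    and F0: "(\<lambda>u. cmod (F u)) \<longlonglongrightarrow> 0"
    and rec: "\<And>u. u \<ge> 1 \<Longrightarrow> F u = A * F (u + 1) + complex_of_real (s u) * C"
  shows "A * F 1 = C * pgf s A"
proof -
  have it: "F 1 = (\<Sum>k<K. A ^ k * complex_of_real (s (k + 1)) * C) + A ^ K * F (K + 1)" for K
  proof (induction K)
    case 0 then show ?case by simp
  next
    case (Suc K)
    have "F (K + 1) = A * F (K + 2) + complex_of_real (s (K + 1)) * C" using rec[of "K+1"] by simp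
    then show ?case using Suc by (simp add: algebra_simps)
  qed
  have sa: "summable (\<lambda>n. \<bar>s n\<bar>)" using s by simp
  note PS = pgf_summ[OF sa A]
  have sh: "(\<lambda>k. complex_of_real (s (k + 1)) * A ^ (k + 1)) sums pgf s A"
    using PS(3) sums_iff_shift[of "\<lambda>n. complex_of_real (s n) * A ^ n" 1 "pgf s A"] s(2) by simp
  have L1: "(\<lambda>K. A * (\<Sum>k<K. A ^ k * complex_of_real (s (k + 1)) * C)) \<longlonglongrightarrow> C * pgf s A"
  proof -
    have "(\<lambda>K. \<Sum>k<K. complex_of_real (s (k + 1)) * A ^ (k + 1)) \<longlonglongrightarrow> pgf s A"
      using sh by (simp add: sums_def)
    then have "(\<lambda>K. C * (\<Sum>k<K. complex_of_real (s (k + 1)) * A ^ (k + 1))) \<longlonglongrightarrow> C * pgf s A"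
      by (intro tendsto_mult tendsto_const)
    moreover have "C * (\<Sum>k<K. complex_of_real (s (k + 1)) * A ^ (k + 1)) = A * (\<Sum>k<K. A ^ k * complex_of_real (s (k + 1)) * C)" for K
      by (simp add: sum_distrib_left algebra_simps)
    ultimately show ?thesis by simp
  qed
  have L2: "(\<lambda>K. A * (A ^ K * F (K + 1))) \<longlonglongrightarrow> 0"
  proof (rule tendsto_norm_zero_cancel, rule Lim_null_comparison[where g = "\<lambda>K. cmod (F (K + 1))"])
    show "\<forall>\<^sub>F K in sequentially. norm (norm (A * (A ^ K * F (K + 1)))) \<le> cmod (F (K + 1))"
    proof (intro always_eventually allI)
      fix K
      have "cmod A * (cmod A ^ K) \<le> 1" using A by (simp add: mult_le_one power_le_one)
      then have "cmod A * (cmod A ^ K) * cmod (F (K+1)) \<le> 1 * cmod (F (K+1))" by (intro mult_right_mono) auto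
      moreover have "norm (norm (A * (A ^ K * F (K + 1)))) = cmod A * (cmod A ^ K) * cmod (F (K+1))"
        by (simp add: norm_mult norm_power)
      ultimately show "norm (norm (A * (A ^ K * F (K + 1)))) \<le> cmod (F (K + 1))" by linarith
    qed
    show "(\<lambda>K. cmod (F (K + 1))) \<longlonglongrightarrow> 0" using F0 LIMSEQ_Suc by fastforce
  qed
  have "(\<lambda>K. A * F 1) \<longlonglongrightarrow> C * pgf s A + 0"
  proof -
    have "A * F 1 = A * (\<Sum>k<K. A ^ k * complex_of_real (s (k + 1)) * C) + A * (A ^ K * F (K + 1))" for K
      using it[of K] by (simp add: algebra_simps)
    then show ?thesis using tendsto_add[OF L1 L2] by simp
  qed
  from LIMSEQ_unique[OF tendsto_const this] show ?thesis by simp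
qed




lemma restrict_r:
  fixes p :: "nat \<Rightarrow> nat \<Rightarrow> nat \<Rightarrow> real"
  assumes S: "(\<lambda>(n, r, u). p n r u) summable_on (UNIV \<times> {a..b} \<times> {1..})" and r: "r \<in> {a..b}"
  shows "(\<lambda>(n, u). p n r u) summable_on (UNIV \<times> {1..})"
proof -
  let ?h = "\<lambda>(n::nat, u::nat). (n, r, u)"
  have inj: "inj_on ?h (UNIV \<times> {1..})" by (auto simp: inj_on_def)
  have sub: "?h ` (UNIV \<times> {1..}) \<subseteq> UNIV \<times> {a..b} \<times> {1..}" using r by auto
  have "(\<lambda>(n, r, u). p n r u) summable_on (?h ` (UNIV \<times> {1..}))"
    by (rule summable_on_subset_banach[OF S sub])
  then have "((\<lambda>(n, r, u). p n r u) \<circ> ?h) summable_on (UNIV \<times> {1..})"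
    using summable_on_reindex[OF inj] by blast
  moreover have "((\<lambda>(n, r, u). p n r u) \<circ> ?h) = (\<lambda>(n, u). p n r u)" by (auto simp: o_def)
  ultimately show ?thesis by simp
qed

lemma pgf_eq: "(\<lambda>n. complex_of_real (f n) * x ^ n) sums S \<Longrightarrow> pgf f x = S"
  unfolding pgf_def by (rule sums_unique[symmetric])

lemma conv_summable:
  fixes f g :: "nat \<Rightarrow> real"
  assumes f: "\<And>n. 0 \<le> f n" "summable f" and g: "\<And>n. 0 \<le> g n" "g 0 = 0" "summable g"
    and lam: "0 \<le> lam" "lam \<le> 1"
  shows "summable (\<lambda>n. (1 - lam) * f n + lam * (\<Sum>i=1..n. g i * f (n - i)))"
    and "\<And>n. 0 \<le> (1 - lam) * f n + lam * (\<Sum>i=1..n. g i * f (n - i))"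
proof -
  have fa: "summable (\<lambda>n. norm (f n))" using f by simp
  have ga: "summable (\<lambda>n. norm (g n))" using g by simp
  have CP: "summable (\<lambda>k. \<Sum>i\<le>k. g i * f (k - i))"
    using Cauchy_product_sums[OF ga fa] by (simp add: sums_iff)
  have eq: "(\<Sum>i\<le>k. g i * f (k - i)) = (\<Sum>i=1..k. g i * f (k - i))" for k
  proof -
    have "{..k} = insert 0 {1..k}" by auto
    then show ?thesis using g(2) by simp
  qed
  have "summable (\<lambda>k. \<Sum>i=1..k. g i * f (k - i))" using CP by (simp add: eq)
  then show "summable (\<lambda>n. (1 - lam) * f n + lam * (\<Sum>i=1..n. g i * f (n - i)))"
    by (intro summable_add summable_mult f(2))
  show "0 \<le> (1 - lam) * f n + lam * (\<Sum>i=1..n. g i * f (n - i))" for n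
    using f g lam by (intro add_nonneg_nonneg mult_nonneg_nonneg sum_nonneg) auto
qed

lemma summable_shift_sub:
  fixes g :: "nat \<Rightarrow> real"
  assumes "summable g"
  shows "summable (\<lambda>n. g (n - i))"
proof -
  have "summable (\<lambda>n. g (n + i - i))" using assms by simp
  then show ?thesis by (subst summable_iff_shift[symmetric, of _ i])
qed




function wseq :: "(nat \<Rightarrow> real) \<Rightarrow> nat \<Rightarrow> real" where
  "wseq g 0 = 1"
| "wseq g (Suc m) = (\<Sum>k=1..Suc m. g k * wseq g (Suc m - k))"
  by pat_completeness auto
termination by (relation "Wellfounded.measure (\<lambda>(g, m). m)") auto

lemma wseq_pos: "0 < m \<Longrightarrow> wseq g m = (\<Sum>k=1..m. g k * wseq g (m - k))"
  by (cases m) auto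

lemma ecoef_wseq: "i \<le> n \<Longrightarrow> ecoef g n i = wseq g (n - i)"
proof (induction "n - i" arbitrary: i rule: less_induct)
  case less
  show ?case
  proof (cases "i = n")
    case True then show ?thesis by (subst ecoef.simps) simp
  next
    case False
    then have lt: "i < n" using less.prems by simp
    define m where "m = n - i"
    have m0: "0 < m" using lt m_def by simp
    have IH: "ecoef g n j = wseq g (n - j)" if "j \<in> {i+1..n-1}" for j
      using that less.hyps[of j] lt by auto
    have "ecoef g n i = (\<Sum>j\<in>{i+1..n-1}. ecoef g n j * g (j - i)) + g (n - i)"
    proof (cases "i + 1 = n")
      case True
      then show ?thesis by (subst ecoef.simps) auto
    next
      case False
      then show ?thesis using lt by (subst ecoef.simps) simp
    qed
    also have "\<dots> = (\<Sum>j\<in>{i+1..n-1}. wseq g (n - j) * g (j - i)) + g (n - i)"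
      using IH by simp
    also have "(\<Sum>j\<in>{i+1..n-1}. wseq g (n - j) * g (j - i)) = (\<Sum>k\<in>{1..m-1}. g k * wseq g (m - k))"
    proof (rule sum.reindex_bij_witness[where i="\<lambda>k. k + i" and j="\<lambda>j. j - i"])
      fix a assume "a \<in> {i+1..n-1}"
      then have "m - (a - i) = n - a" "a - i + i = a" "a - i \<in> {1..m-1}" using m_def lt by auto
      then show "a - i + i = a" "a - i \<in> {1..m-1}" "g (a - i) * wseq g (m - (a - i)) = wseq g (n - a) * g (a - i)"
        by (simp_all add: mult.commute)
    next
      fix b assume "b \<in> {1..m-1}"
      then show "b + i - i = b" "b + i \<in> {i+1..n-1}" using m_def lt by auto
    qed
    also have "(\<Sum>k\<in>{1..m-1}. g k * wseq g (m - k)) + g (n - i) = (\<Sum>k=1..m. g k * wseq g (m - k))"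
    proof -
      have ins: "{1..m} = insert m {1..m-1}" using m0 by auto
      have "(\<Sum>k=1..m. g k * wseq g (m - k)) = g m * wseq g (m - m) + (\<Sum>k=1..m-1. g k * wseq g (m - k))"
        unfolding ins by (rule sum.insert) auto
      moreover have "g (n - i) = g m" using m_def by simp
      ultimately show ?thesis by simp
    qed
    also have "\<dots> = wseq g (n - i)" using wseq_pos[OF m0] m_def by simp
    finally show ?thesis .
  qed
qed

lemma renewal:
  fixes g Lv c :: "nat \<Rightarrow> real"
  assumes rec: "\<And>n. n < a \<Longrightarrow> Lv n = (\<Sum>i=1..n. g i * Lv (n - i)) + c n"
  shows "j < a \<Longrightarrow> Lv j = (\<Sum>n=0..j. wseq g (j - n) * c n)"
proof (induction j rule: less_induct)
  case (less j)
  have IH: "Lv (j - i) = (\<Sum>n=0..j-i. wseq g (j - i - n) * c n)" if "i \<in> {1..j}" for i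
    using less.IH[of "j - i"] less.prems that by auto
  have "Lv j = (\<Sum>i=1..j. g i * Lv (j - i)) + c j" using rec[OF less.prems] .
  also have "(\<Sum>i=1..j. g i * Lv (j - i)) = (\<Sum>i=1..j. g i * (\<Sum>n=0..j-i. wseq g (j - i - n) * c n))"
    using IH by (intro sum.cong) auto
  also have "\<dots> = (\<Sum>i\<in>{1..j}. \<Sum>n\<in>{n. n \<in> {0..<j} \<and> n + i \<le> j}. g i * wseq g (j - i - n) * c n)"
  proof (rule sum.cong[OF refl])
    fix i assume i: "i \<in> {1..j}"
    have "{n. n \<in> {0..<j} \<and> n + i \<le> j} = {0..j-i}" using i by auto
    then show "g i * (\<Sum>n=0..j-i. wseq g (j - i - n) * c n) = (\<Sum>n\<in>{n. n \<in> {0..<j} \<and> n + i \<le> j}. g i * wseq g (j - i - n) * c n)"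
      by (simp add: sum_distrib_left mult.assoc)
  qed
  also have "\<dots> = (\<Sum>n\<in>{0..<j}. \<Sum>i\<in>{i. i \<in> {1..j} \<and> n + i \<le> j}. g i * wseq g (j - i - n) * c n)"
    by (rule sum.swap_restrict) auto
  also have "\<dots> = (\<Sum>n\<in>{0..<j}. wseq g (j - n) * c n)"
  proof (rule sum.cong[OF refl])
    fix n assume n: "n \<in> {0..<j}"
    have "{i. i \<in> {1..j} \<and> n + i \<le> j} = {1..j-n}" using n by auto
    moreover have "wseq g (j - n) = (\<Sum>k=1..j-n. g k * wseq g (j - n - k))" using n by (intro wseq_pos) auto
    moreover have "j - i - n = j - n - i" for i by simp
    ultimately show "(\<Sum>i\<in>{i. i \<in> {1..j} \<and> n + i \<le> j}. g i * wseq g (j - i - n) * c n) = wseq g (j - n) * c n"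
      by (simp add: sum_distrib_right)
  qed
  also have "(\<Sum>n\<in>{0..<j}. wseq g (j - n) * c n) + c j = (\<Sum>n=0..j. wseq g (j - n) * c n)"
    by (simp add: atLeastLessThanSuc_atLeastAtMost[symmetric])
  finally show ?case .
qed




definition NumG :: "nat \<Rightarrow> nat \<Rightarrow> complex \<Rightarrow> (nat \<Rightarrow> complex) \<Rightarrow> (nat \<Rightarrow> nat \<Rightarrow> complex) \<Rightarrow> (nat \<Rightarrow> complex)
   \<Rightarrow> (nat \<Rightarrow> complex) \<Rightarrow> complex \<Rightarrow> complex \<Rightarrow> complex \<Rightarrow> (nat \<Rightarrow> complex) \<Rightarrow> (nat \<Rightarrow> complex) \<Rightarrow> complex" where
  "NumG a b dl G E W K H x y P Qv =
     (\<Sum>n<a. P n * x ^ n) * (H - 1) * y ^ b * K b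
     + (\<Sum>n<a. Qv n *
         (x ^ n * (dl * H - 1) * y ^ b * K b
          + (1 - dl) * (\<Sum>j=n..a-1. E j n *
              ((\<Sum>i=a..b. G (i - j) * K i * ((x ^ b - K b) * y ^ i + y ^ b * K b))
               + W j * y ^ b * K b))))
     + (\<Sum>n=a..b-1. (P n + Qv n) *
         (K b * K n * (y ^ b - y ^ n) + K n * x ^ b * y ^ n - K b * x ^ n * y ^ b))"

lemma NumG_scale: "NumG a b dl G E W K H x y (\<lambda>n. c * P n) (\<lambda>n. c * Qv n) = c * NumG a b dl G E W K H x y P Qv"
proof -
  have 1: "(\<Sum>n<a. c * P n * x ^ n) = c * (\<Sum>n<a. P n * x ^ n)" by (simp add: sum_distrib_left mult.assoc)
  have 2: "(\<Sum>n<a. c * Qv n * Z n) = c * (\<Sum>n<a. Qv n * Z n)" for Z by (simp add: sum_distrib_left mult.assoc)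
  have 3: "(\<Sum>n=a..b-1. (c * P n + c * Qv n) * Z n) = c * (\<Sum>n=a..b-1. (P n + Qv n) * Z n)" for Z
    by (simp add: sum_distrib_left algebra_simps)
  show ?thesis unfolding NumG_def 1 2 3 by (simp add: algebra_simps)
qed

lemma core:
  fixes K G W P Qv ell L :: "nat \<Rightarrow> complex" and E :: "nat \<Rightarrow> nat \<Rightarrow> complex"
    and H x y D Cb Pi Lam dl :: complex
  assumes ab: "1 \<le> a" "a \<le> b"
    and h1: "x ^ b * Cb = Pi + Lam - (\<Sum>n<b. (P n + Qv n + ell n) * x ^ n)"
    and h2: "Pi = (\<Sum>r=a..<b. (P r + Qv r + ell r) * K r) + Cb * K b + D * H"
    and h3: "D = (\<Sum>n<a. (P n + dl * Qv n) * x ^ n)"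
    and h4: "Lam - (\<Sum>n<b. ell n * x ^ n) = (\<Sum>i<a. L i * (G (b - i) * x ^ b + W i))"
    and h5: "\<And>r. r \<in> {a..<b} \<Longrightarrow> ell r = (\<Sum>i<a. G (r - i) * L i)"
    and h6: "\<And>j. j < a \<Longrightarrow> L j = (1 - dl) * (\<Sum>n\<le>j. E j n * Qv n)"
  shows "(x ^ b - K b) * ((\<Sum>r=a..<b. y ^ r * (P r + Qv r + ell r) * K r) + y ^ b * Cb * K b)
         = NumG a b dl G E W K H x y P Qv"
proof -
  define pi where "pi n = P n + Qv n" for n
  define X where "X j = (\<Sum>i=a..b. G (i - j) * K i * ((x ^ b - K b) * y ^ i + y ^ b * K b)) + W j * y ^ b * K b" for j
  define c where "c r = (x ^ b - K b) * y ^ r * K r + y ^ b * K b * K r" for r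
  have bm1: "{a..b-1} = {a..<b}" using ab by auto
  have split_b: "(\<Sum>n<b. f n) = (\<Sum>n<a. f n) + (\<Sum>n=a..<b. f n)" for f :: "nat \<Rightarrow> complex"
  proof -
    have eq: "{..<b} = {..<a} \<union> {a..<b}" using ab by auto
    have "sum f ({..<a} \<union> {a..<b}) = sum f {..<a} + sum f {a..<b}" by (rule sum.union_disjoint) auto
    then show ?thesis unfolding eq .
  qed
  have A1: "(x ^ b - K b) * Cb = (\<Sum>r=a..<b. (pi r + ell r) * K r) + D * H
      + (\<Sum>i<a. L i * (G (b - i) * x ^ b + W i)) - (\<Sum>n<a. pi n * x ^ n) - (\<Sum>n=a..<b. pi n * x ^ n)"
  proof -
    have e1: "(\<Sum>n<b. (P n + Qv n + ell n) * x ^ n) = (\<Sum>n<b. pi n * x ^ n) + (\<Sum>n<b. ell n * x ^ n)"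
      by (simp add: pi_def sum.distrib[symmetric] algebra_simps)
    have "(x ^ b - K b) * Cb = x ^ b * Cb - K b * Cb" by (simp add: algebra_simps)
    also have "\<dots> = (\<Sum>r=a..<b. (pi r + ell r) * K r) + D * H + (Lam - (\<Sum>n<b. ell n * x ^ n)) - (\<Sum>n<b. pi n * x ^ n)"
      using h1 h2 e1 by (simp add: pi_def algebra_simps)
    also have "\<dots> = (\<Sum>r=a..<b. (pi r + ell r) * K r) + D * H
      + (\<Sum>i<a. L i * (G (b - i) * x ^ b + W i)) - (\<Sum>n<a. pi n * x ^ n) - (\<Sum>n=a..<b. pi n * x ^ n)"
      using h4 split_b[of "\<lambda>n. pi n * x ^ n"] by simp
    finally show ?thesis .
  qed
  have LHS: "(x ^ b - K b) * ((\<Sum>r=a..<b. y ^ r * (P r + Qv r + ell r) * K r) + y ^ b * Cb * K b)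
     = (\<Sum>r=a..<b. pi r * c r) - y ^ b * K b * (\<Sum>n=a..<b. pi n * x ^ n)
       + y ^ b * K b * (D * H - (\<Sum>n<a. pi n * x ^ n))
       + ((\<Sum>r=a..<b. ell r * c r) + y ^ b * K b * (\<Sum>i<a. L i * (G (b - i) * x ^ b + W i)))"
  proof -
    have "(x ^ b - K b) * ((\<Sum>r=a..<b. y ^ r * (P r + Qv r + ell r) * K r) + y ^ b * Cb * K b)
       = (\<Sum>r=a..<b. (x ^ b - K b) * y ^ r * (pi r + ell r) * K r) + y ^ b * K b * ((x ^ b - K b) * Cb)"
      by (simp add: pi_def sum_distrib_left algebra_simps)
    also have "\<dots> = (\<Sum>r=a..<b. (x ^ b - K b) * y ^ r * (pi r + ell r) * K r) + y ^ b * K b * (\<Sum>r=a..<b. (pi r + ell r) * K r)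
       + y ^ b * K b * (D * H - (\<Sum>n<a. pi n * x ^ n))
       + y ^ b * K b * (\<Sum>i<a. L i * (G (b - i) * x ^ b + W i))
       - y ^ b * K b * (\<Sum>n=a..<b. pi n * x ^ n)"
      unfolding A1 by (simp add: algebra_simps)
    also have "(\<Sum>r=a..<b. (x ^ b - K b) * y ^ r * (pi r + ell r) * K r) + y ^ b * K b * (\<Sum>r=a..<b. (pi r + ell r) * K r)
        = (\<Sum>r=a..<b. pi r * c r) + (\<Sum>r=a..<b. ell r * c r)"
      by (simp add: c_def sum_distrib_left sum.distrib[symmetric] algebra_simps)
    finally show ?thesis by (simp add: algebra_simps)
  qed
  have T1: "(\<Sum>r=a..<b. pi r * c r) - y ^ b * K b * (\<Sum>n=a..<b. pi n * x ^ n)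
      = (\<Sum>n=a..b-1. (P n + Qv n) * (K b * K n * (y ^ b - y ^ n) + K n * x ^ b * y ^ n - K b * x ^ n * y ^ b))"
    unfolding bm1 by (simp add: pi_def c_def sum_distrib_left sum_subtractf[symmetric] algebra_simps)
  have T2: "y ^ b * K b * (D * H - (\<Sum>n<a. pi n * x ^ n))
      = (\<Sum>n<a. P n * x ^ n) * (H - 1) * y ^ b * K b + (\<Sum>n<a. Qv n * (x ^ n * (dl * H - 1) * y ^ b * K b))"
    unfolding h3 by (simp add: pi_def sum_distrib_left sum_distrib_right sum_subtractf[symmetric] sum.distrib[symmetric] algebra_simps)
  have T3: "(\<Sum>r=a..<b. ell r * c r) + y ^ b * K b * (\<Sum>i<a. L i * (G (b - i) * x ^ b + W i)) = (\<Sum>i<a. L i * X i)"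
  proof -
    have "(\<Sum>r=a..<b. ell r * c r) = (\<Sum>r=a..<b. \<Sum>i<a. L i * (G (r - i) * c r))"
    proof (rule sum.cong[OF refl])
      fix r assume "r \<in> {a..<b}"
      then have "ell r = (\<Sum>i<a. G (r - i) * L i)" by (rule h5)
      then show "ell r * c r = (\<Sum>i<a. L i * (G (r - i) * c r))" by (simp add: sum_distrib_left sum_distrib_right mult_ac)
    qed
    also have "\<dots> = (\<Sum>i<a. L i * (\<Sum>r=a..<b. G (r - i) * c r))"
      by (subst sum.swap) (simp add: sum_distrib_left)
    finally have e: "(\<Sum>r=a..<b. ell r * c r) = (\<Sum>i<a. L i * (\<Sum>r=a..<b. G (r - i) * c r))" .
    have Xe: "X i = (\<Sum>r=a..<b. G (r - i) * c r) + y ^ b * K b * (G (b - i) * x ^ b + W i)" for i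
    proof -
      have ins: "{a..b} = insert b {a..<b}" using ab by auto
      have "X i = G (b - i) * K b * ((x ^ b - K b) * y ^ b + y ^ b * K b)
          + (\<Sum>r=a..<b. G (r - i) * K r * ((x ^ b - K b) * y ^ r + y ^ b * K b)) + W i * y ^ b * K b"
        unfolding X_def ins by simp
      also have "(\<Sum>r=a..<b. G (r - i) * K r * ((x ^ b - K b) * y ^ r + y ^ b * K b)) = (\<Sum>r=a..<b. G (r - i) * c r)"
        by (intro sum.cong) (auto simp: c_def algebra_simps)
      finally show ?thesis by (simp add: algebra_simps)
    qed
    show ?thesis unfolding e Xe by (simp add: sum_distrib_left sum.distrib algebra_simps)
  qed
  have T4: "(\<Sum>n<a. Qv n * ((1 - dl) * (\<Sum>j=n..a-1. E j n * X j))) = (\<Sum>i<a. L i * X i)"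
  proof -
    have "(\<Sum>n<a. Qv n * ((1 - dl) * (\<Sum>j=n..a-1. E j n * X j)))
        = (\<Sum>n<a. \<Sum>j\<in>{j. j \<in> {..<a} \<and> n \<le> j}. Qv n * (1 - dl) * E j n * X j)"
    proof (rule sum.cong[OF refl])
      fix n assume "n \<in> {..<a}"
      then have "{j. j \<in> {..<a} \<and> n \<le> j} = {n..a-1}" by auto
      then show "Qv n * ((1 - dl) * (\<Sum>j=n..a-1. E j n * X j)) = (\<Sum>j\<in>{j. j \<in> {..<a} \<and> n \<le> j}. Qv n * (1 - dl) * E j n * X j)"
        by (simp add: sum_distrib_left algebra_simps)
    qed
    also have "\<dots> = (\<Sum>j<a. \<Sum>n\<in>{n. n \<in> {..<a} \<and> n \<le> j}. Qv n * (1 - dl) * E j n * X j)"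
      by (rule sum.swap_restrict) auto
    also have "\<dots> = (\<Sum>j<a. L j * X j)"
    proof (rule sum.cong[OF refl])
      fix j assume j: "j \<in> {..<a}"
      then have "{n. n \<in> {..<a} \<and> n \<le> j} = {..j}" by auto
      then show "(\<Sum>n\<in>{n. n \<in> {..<a} \<and> n \<le> j}. Qv n * (1 - dl) * E j n * X j) = L j * X j"
        using h6[of j] j by (simp add: sum_distrib_left sum_distrib_right algebra_simps)
    qed
    finally show ?thesis .
  qed
  have NG: "NumG a b dl G E W K H x y P Qv = (\<Sum>n<a. P n * x ^ n) * (H - 1) * y ^ b * K b
      + (\<Sum>n<a. Qv n * (x ^ n * (dl * H - 1) * y ^ b * K b))
      + (\<Sum>n<a. Qv n * ((1 - dl) * (\<Sum>j=n..a-1. E j n * X j)))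
      + (\<Sum>n=a..b-1. (P n + Qv n) * (K b * K n * (y ^ b - y ^ n) + K n * x ^ b * y ^ n - K b * x ^ n * y ^ b))"
    unfolding NumG_def X_def by (simp add: sum.distrib distrib_left)
  show ?thesis unfolding LHS NG T1 T2 T3 T4 by (simp add: add_ac)
qed




lemma GF_iter:
  fixes q :: "nat \<Rightarrow> nat \<Rightarrow> real" and g sv ex :: "nat \<Rightarrow> real" and lam :: real and x :: complex
  assumes qS: "(\<lambda>(n, u). q n u) summable_on (UNIV \<times> {1..})"
    and qnn: "\<And>n u. u \<ge> 1 \<Longrightarrow> 0 \<le> q n u"
    and g: "\<And>n. 0 \<le> g n" "g 0 = 0" "summable g" "suminf g = 1"
    and sv: "\<And>n. 0 \<le> sv n" "sv 0 = 0" "summable sv"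
    and ex: "summable (\<lambda>n. \<bar>ex n\<bar>)"
    and lam: "0 \<le> lam" "lam \<le> 1"
    and x: "cmod x \<le> 1"
    and rec: "\<And>n u. u \<ge> 1 \<Longrightarrow> q n u = (1 - lam) * q n (u + 1) + lam * (\<Sum>i=1..n. g i * q (n - i) (u + 1)) + sv u * ex n"
  shows "pgf (\<lambda>n. (1 - lam) * q n 1 + lam * (\<Sum>i=1..n. g i * q (n - i) 1)) x
         = pgf ex x * pgf sv (complex_of_real (1 - lam) + complex_of_real lam * pgf g x)"
proof -
  define A where "A = complex_of_real (1 - lam) + complex_of_real lam * pgf g x"
  have Gn: "cmod (pgf g x) \<le> 1" using pgf_norm_le[of g x] g x by simp
  have An: "cmod A \<le> 1"
  proof -
    have "cmod A \<le> cmod (complex_of_real (1 - lam)) + cmod (complex_of_real lam * pgf g x)"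
      unfolding A_def by (rule norm_triangle_ineq)
    also have "\<dots> = (1 - lam) + lam * cmod (pgf g x)"
    proof -
      have "cmod (complex_of_real (1 - lam)) = 1 - lam" using lam by (subst norm_of_real) simp
      moreover have "cmod (complex_of_real lam * pgf g x) = lam * cmod (pgf g x)" using lam by (simp add: norm_mult)
      ultimately show ?thesis by simp
    qed
    also have "\<dots> \<le> (1 - lam) + lam * 1" using Gn lam by (intro add_left_mono mult_left_mono) auto
    finally show ?thesis by simp
  qed
  have E1: "\<And>u. u \<ge> 1 \<Longrightarrow> summable (\<lambda>n. q n u)" using extract_sum(1)[of q] qS qnn by blast
  have E2: "(\<lambda>u. \<Sum>n. q n u) \<longlonglongrightarrow> 0" using extract_sum(2)[of q] qS qnn by blast
  define F where "F u = pgf (\<lambda>n. q n u) x" for u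
  have qabs: "summable (\<lambda>n. \<bar>q n u\<bar>)" if "u \<ge> 1" for u
    using E1[OF that] qnn[OF that] by simp
  have Frec: "F u = A * F (u + 1) + complex_of_real (sv u) * pgf ex x" if u: "u \<ge> 1" for u
  proof -
    have c: "(\<lambda>n. complex_of_real ((1 - lam) * q n (u + 1) + lam * (\<Sum>i=1..n. g i * q (n - i) (u + 1))) * x ^ n)
        sums (A * F (u + 1))"
      unfolding A_def F_def by (rule conv_sums[OF qabs g(1,2,3) x]) simp
    have e: "(\<lambda>n. complex_of_real (sv u) * (complex_of_real (ex n) * x ^ n)) sums (complex_of_real (sv u) * pgf ex x)"
      by (rule sums_mult[OF pgf_summ(3)[OF ex x]])
    have "(\<lambda>n. complex_of_real ((1 - lam) * q n (u + 1) + lam * (\<Sum>i=1..n. g i * q (n - i) (u + 1))) * x ^ n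
        + complex_of_real (sv u) * (complex_of_real (ex n) * x ^ n)) sums (A * F (u + 1) + complex_of_real (sv u) * pgf ex x)"
      by (rule sums_add[OF c e])
    moreover have "complex_of_real ((1 - lam) * q n (u + 1) + lam * (\<Sum>i=1..n. g i * q (n - i) (u + 1))) * x ^ n
        + complex_of_real (sv u) * (complex_of_real (ex n) * x ^ n) = complex_of_real (q n u) * x ^ n" for n
    proof -
      have "complex_of_real (q n u) = complex_of_real ((1 - lam) * q n (u + 1) + lam * (\<Sum>i=1..n. g i * q (n - i) (u + 1)))
          + complex_of_real (sv u) * complex_of_real (ex n)"
        using rec[OF u, of n] by (metis of_real_add of_real_mult)
      then show ?thesis by (simp only: distrib_right mult.assoc)
    qed
    ultimately have "(\<lambda>n. complex_of_real (q n u) * x ^ n) sums (A * F (u + 1) + complex_of_real (sv u) * pgf ex x)"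
      by simp
    then show ?thesis unfolding F_def by (rule pgf_eq)
  qed
  have F0: "(\<lambda>u. cmod (F u)) \<longlonglongrightarrow> 0"
  proof (rule Lim_null_comparison[OF _ E2])
    show "\<forall>\<^sub>F u in sequentially. norm (cmod (F u)) \<le> (\<Sum>n. q n u)"
    proof (rule eventually_sequentiallyI[of 1])
      fix u :: nat assume u: "1 \<le> u"
      show "norm (cmod (F u)) \<le> (\<Sum>n. q n u)"
        unfolding F_def using pgf_norm_le[of "\<lambda>n. q n u" x] qnn[OF u] E1[OF u] x by simp
    qed
  qed
  have it: "A * F 1 = pgf ex x * pgf sv A"
    by (rule iterate_lemma[OF An sv F0 Frec])
  have "(\<lambda>n. complex_of_real ((1 - lam) * q n 1 + lam * (\<Sum>i=1..n. g i * q (n - i) 1)) * x ^ n) sums (A * F 1)"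
    unfolding A_def F_def by (rule conv_sums[OF qabs g(1,2,3) x]) simp
  then have "pgf (\<lambda>n. (1 - lam) * q n 1 + lam * (\<Sum>i=1..n. g i * q (n - i) 1)) x = A * F 1"
    by (rule pgf_eq)
  then show ?thesis using it unfolding A_def by simp
qed



theorem mainTheorem3:
  fixes a b \<delta> :: nat and lam :: real
    and g :: "nat \<Rightarrow> real" and s :: "nat \<Rightarrow> nat \<Rightarrow> real" and v :: "nat \<Rightarrow> real"
    and p0 :: "nat \<Rightarrow> real" and p :: "nat \<Rightarrow> nat \<Rightarrow> nat \<Rightarrow> real" and Q :: "nat \<Rightarrow> nat \<Rightarrow> real"
    and x y :: complex
  assumes ab: "1 \<le> a" "a \<le> b"
    and lam: "0 < lam" "lam < 1"
    and g: "\<forall>m. 0 \<le> g m" "g 0 = 0" "g sums 1" "summable (\<lambda>m. real m * g m)"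
    and s: "\<forall>r\<in>{a..b}. (\<forall>n. 0 \<le> s r n) \<and> s r 0 = 0 \<and> s r sums 1 \<and> summable (\<lambda>n. real n * s r n)"
    and v: "\<forall>n. 0 \<le> v n" "v 0 = 0" "v sums 1" "summable (\<lambda>n. real n * v n)"
    and delta: "\<delta> = 0 \<or> \<delta> = 1"
    and rho: "lam * (\<Sum>m. real m * g m) * (\<Sum>n. real n * s b n) / real b < 1"
    and nonneg: "\<forall>n<a. 0 \<le> p0 n"
      "\<forall>n. \<forall>r\<in>{a..b}. \<forall>u\<ge>1. 0 \<le> p n r u"
      "\<forall>n. \<forall>u\<ge>1. 0 \<le> Q n u"
    and E1: "p0 0 = (1 - real \<delta>) * ((1 - lam) * p0 0 + (1 - lam) * Q 0 1)"
    and E2: "\<forall>n\<in>{1..a-1}. p0 n = (1 - real \<delta>) * ((1 - lam) * p0 n + lam * (\<Sum>i=1..n. g i * p0 (n - i))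
               + (1 - lam) * Q n 1 + lam * (\<Sum>i=1..n. g i * Q (n - i) 1))"
    and E3: "\<forall>r\<in>{a..b}. \<forall>u\<ge>1. p 0 r u = (1 - lam) * p 0 r (u + 1)
               + s r u * ((\<Sum>m=a..b. (1 - lam) * p r m 1 + lam * (\<Sum>i=1..r. g i * p (r - i) m 1))
                 + (1 - lam) * Q r 1 + lam * (\<Sum>i=1..r. g i * Q (r - i) 1)
                 + (1 - real \<delta>) * lam * (\<Sum>i=0..a-1. g (r - i) * p0 i))"
    and E4: "\<forall>n\<ge>1. \<forall>r\<in>{a..b-1}. \<forall>u\<ge>1. p n r u = (1 - lam) * p n r (u + 1)
               + lam * (\<Sum>i=1..n. g i * p (n - i) r (u + 1))"
    and E5: "\<forall>n\<ge>1. \<forall>u\<ge>1. p n b u = (1 - lam) * p n b (u + 1)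
               + lam * (\<Sum>i=1..n. g i * p (n - i) b (u + 1))
               + s b u * ((\<Sum>m=a..b. (1 - lam) * p (n + b) m 1 + lam * (\<Sum>i=1..n+b. g i * p (n + b - i) m 1))
                 + (1 - lam) * Q (n + b) 1 + lam * (\<Sum>i=1..n+b. g i * Q (n + b - i) 1)
                 + (1 - real \<delta>) * lam * (\<Sum>i=0..a-1. g (n + b - i) * p0 i))"
    and E6: "\<forall>u\<ge>1. Q 0 u = (1 - lam) * Q 0 (u + 1)
               + (1 - lam) * ((\<Sum>m=a..b. p 0 m 1) + real \<delta> * Q 0 1) * v u"
    and E7: "\<forall>n\<in>{1..a-1}. \<forall>u\<ge>1. Q n u = (1 - lam) * Q n (u + 1)
               + lam * (\<Sum>i=1..n. g i * Q (n - i) (u + 1))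
               + v u * ((1 - lam) * ((\<Sum>m=a..b. p n m 1) + real \<delta> * Q n 1)
                 + lam * (\<Sum>i=1..n. g i * ((\<Sum>m=a..b. p (n - i) m 1) + real \<delta> * Q (n - i) 1)))"
    and E8: "\<forall>n\<ge>a. \<forall>u\<ge>1. Q n u = (1 - lam) * Q n (u + 1) + lam * (\<Sum>i=1..n. g i * Q (n - i) (u + 1))"
    and N: "(\<lambda>(n, r, u). p n r u) summable_on (UNIV \<times> {a..b} \<times> {1..})"
      "(\<lambda>(n, u). Q n u) summable_on (UNIV \<times> {1..})"
      "(1 - real \<delta>) * (\<Sum>n<a. p0 n)
         + infsum (\<lambda>(n, r, u). p n r u) (UNIV \<times> {a..b} \<times> {1..})
         + infsum (\<lambda>(n, u). Q n u) (UNIV \<times> {1..}) = 1"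
    and xy: "cmod x \<le> 1" "cmod y \<le> 1" "x ^ b \<noteq> Kf lam g s b x"
  shows "(\<lambda>n. \<Sum>r=a..b. complex_of_real (pplus lam g a b p Q n r) * x ^ n * y ^ r) sums
    (( (\<Sum>n<a. complex_of_real (pplusn lam g a b p Q n) * x ^ n) * (Hf lam g v x - 1) * y ^ b * Kf lam g s b x
     + (\<Sum>n<a. complex_of_real (Qplus lam g a b p Q n) *
         (x ^ n * (of_nat \<delta> * Hf lam g v x - 1) * y ^ b * Kf lam g s b x
          + (1 - of_nat \<delta>) * (\<Sum>j=n..a-1. complex_of_real (ecoef g j n) *
              ((\<Sum>i=a..b. complex_of_real (g (i - j)) * Kf lam g s i x
                   * ((x ^ b - Kf lam g s b x) * y ^ i + y ^ b * Kf lam g s b x))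
               + (\<Sum>k. complex_of_real (g (k + (b + 1 - j))) * x ^ (k + (b + 1 - j) + j))
                   * y ^ b * Kf lam g s b x))))
     + (\<Sum>n=a..b-1. (complex_of_real (pplusn lam g a b p Q n) + complex_of_real (Qplus lam g a b p Q n)) *
         (Kf lam g s b x * Kf lam g s n x * (y ^ b - y ^ n) + Kf lam g s n x * x ^ b * y ^ n
          - Kf lam g s b x * x ^ n * y ^ b)))
     / (x ^ b - Kf lam g s b x))"
proof -
  have g0: "\<And>m. 0 \<le> g m" using g(1) by simp
  have gsum: "summable g" using g(3) by (rule sums_summable)
  have g1: "suminf g = 1" using g(3) by (simp add: sums_iff)
  have lam0: "0 \<le> lam" "lam \<le> 1" using lam by auto
  have sr: "(\<forall>n. 0 \<le> s r n) \<and> s r 0 = 0 \<and> summable (s r)" if "r \<in> {a..b}" for r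
    using s that sums_summable by blast
  have vsum: "summable v" using v(3) by (rule sums_summable)
  have pnn: "\<And>n r u. r \<in> {a..b} \<Longrightarrow> u \<ge> 1 \<Longrightarrow> 0 \<le> p n r u" using nonneg(2) by blast
  have Qnn: "\<And>n u. u \<ge> 1 \<Longrightarrow> 0 \<le> Q n u" using nonneg(3) by blast
  have set01: "{0..a-1} = {..<a}" using ab by auto
  have d01: "0 \<le> 1 - real \<delta>" using delta by auto

  define Pp where "Pp n r = (1 - lam) * p n r 1 + lam * (\<Sum>i=1..n. g i * p (n - i) r 1)" for n r
  define Qq where "Qq n = (1 - lam) * Q n 1 + lam * (\<Sum>i=1..n. g i * Q (n - i) 1)" for n
  define Ppn where "Ppn n = (\<Sum>r=a..b. Pp n r)" for n
  define TT where "TT = tau a b p Q"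
  define L where "L i = (1 - real \<delta>) * lam * p0 i" for i
  define ell where "ell m = (\<Sum>i<a. g (m - i) * L i)" for m
  define br where "br m = Ppn m + Qq m + ell m" for m
  define Cb where "Cb = pgf (\<lambda>n. br (n + b)) x"
  define D where "D = (\<Sum>n<a. complex_of_real (Ppn n + real \<delta> * Qq n) * x ^ n)"

  have pS: "(\<lambda>(n, u). p n r u) summable_on (UNIV \<times> {1..})" if "r \<in> {a..b}" for r
    by (rule restrict_r[OF N(1) that])
  have p1sum: "summable (\<lambda>n. p n r 1)" if "r \<in> {a..b}" for r
    using extract_sum(1)[of "\<lambda>n u. p n r u" 1] pS[OF that] pnn[OF that] by auto
  have Q1sum: "summable (\<lambda>n. Q n 1)"
    using extract_sum(1)[of Q 1] N(2) Qnn by auto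
  have Ppsum: "summable (\<lambda>n. Pp n r)" "\<And>n. 0 \<le> Pp n r" if "r \<in> {a..b}" for r
    unfolding Pp_def using conv_summable[of "\<lambda>n. p n r 1" g lam] p1sum[OF that] pnn[OF that] g0 g(2) gsum lam0 by auto
  have Qqsum: "summable Qq" "\<And>n. 0 \<le> Qq n"
    unfolding Qq_def using conv_summable[of "\<lambda>n. Q n 1" g lam] Q1sum Qnn g0 g(2) gsum lam0 by auto
  have Ppnsum: "summable Ppn" "\<And>n. 0 \<le> Ppn n"
    unfolding Ppn_def using Ppsum by (auto intro!: summable_sum sum_nonneg)
  have Lnn: "\<And>i. i < a \<Longrightarrow> 0 \<le> L i" unfolding L_def using d01 lam0 nonneg(1) by simp
  have ellsum: "summable ell" "\<And>n. 0 \<le> ell n"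
    unfolding ell_def using summable_shift_sub[OF gsum] Lnn g0
    by (auto intro!: summable_sum summable_mult2 sum_nonneg mult_nonneg_nonneg)
  have brsum: "summable br" "\<And>n. 0 \<le> br n"
    unfolding br_def using Ppnsum Qqsum ellsum by (auto intro!: summable_add)
  have brbsum: "summable (\<lambda>n. \<bar>br (n + b)\<bar>)"
    using brsum summable_iff_shift[of br b] by simp

  have brk: "(\<Sum>m'=a..b. (1 - lam) * p m m' 1 + lam * (\<Sum>i=1..m. g i * p (m - i) m' 1))
      + (1 - lam) * Q m 1 + lam * (\<Sum>i=1..m. g i * Q (m - i) 1)
      + (1 - real \<delta>) * lam * (\<Sum>i=0..a-1. g (m - i) * p0 i) = br m" for m
  proof -
    have "(1 - real \<delta>) * lam * (\<Sum>i=0..a-1. g (m - i) * p0 i) = ell m"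
      unfolding ell_def L_def set01 by (simp add: sum_distrib_left mult_ac)
    then show ?thesis unfolding br_def Ppn_def Pp_def Qq_def by simp
  qed

  have Kdef: "Kf lam g s r x = pgf (s r) (complex_of_real (1 - lam) + complex_of_real lam * pgf g x)" for r
    unfolding Kf_def ..
  have Hdef: "Hf lam g v x = pgf v (complex_of_real (1 - lam) + complex_of_real lam * pgf g x)"
    unfolding Hf_def ..

  have G1: "pgf (\<lambda>n. Pp n r) x = complex_of_real (br r) * Kf lam g s r x" if r: "r \<in> {a..<b}" for r
  proof -
    have rab: "r \<in> {a..b}" using r by auto
    have exs: "(\<lambda>n. complex_of_real (if n = 0 then br r else 0) * x ^ n) sums complex_of_real (br r)"
    proof -
      have "(\<lambda>n. complex_of_real (if n = 0 then br r else 0) * x ^ n) sums (\<Sum>n\<in>{0}. complex_of_real (if n = 0 then br r else 0) * x ^ n)"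
        by (rule sums_finite) auto
      then show ?thesis by simp
    qed
    have exa: "summable (\<lambda>n. \<bar>if n = 0 then br r else 0\<bar>)"
    proof -
      show ?thesis by (rule summable_finite[of "{0}"]) auto
    qed
    have rec: "p n r u = (1 - lam) * p n r (u + 1) + lam * (\<Sum>i=1..n. g i * p (n - i) r (u + 1)) + s r u * (if n = 0 then br r else 0)"
      if u: "u \<ge> 1" for n u
    proof (cases "n = 0")
      case True
      have "p 0 r u = (1 - lam) * p 0 r (u + 1) + s r u * br r"
        using E3[rule_format, OF rab u] unfolding brk .
      then show ?thesis using True by simp
    next
      case False
      then have "n \<ge> 1" by simp
      moreover have "r \<in> {a..b-1}" using r by auto
      ultimately show ?thesis using E4[rule_format, of n r u] u False by simp
    qed
    have "pgf (\<lambda>n. (1 - lam) * p n r 1 + lam * (\<Sum>i=1..n. g i * p (n - i) r 1)) x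
        = pgf (\<lambda>n. if n = 0 then br r else 0) x * pgf (s r) (complex_of_real (1 - lam) + complex_of_real lam * pgf g x)"
      by (rule GF_iter[of "\<lambda>n u. p n r u", OF pS[OF rab] pnn[OF rab] g0 g(2) gsum g1 _ _ _ exa lam0 xy(1) rec])
         (use sr[OF rab] in auto)
    moreover have "pgf (\<lambda>n. if n = 0 then br r else 0) x = complex_of_real (br r)" by (rule pgf_eq[OF exs])
    ultimately show ?thesis unfolding Pp_def Kdef by simp
  qed

  have G2: "pgf (\<lambda>n. Pp n b) x = Cb * Kf lam g s b x"
  proof -
    have bab: "b \<in> {a..b}" using ab by auto
    have rec: "p n b u = (1 - lam) * p n b (u + 1) + lam * (\<Sum>i=1..n. g i * p (n - i) b (u + 1)) + s b u * br (n + b)"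
      if u: "u \<ge> 1" for n u
    proof (cases "n = 0")
      case True
      have "p 0 b u = (1 - lam) * p 0 b (u + 1) + s b u * br b"
        using E3[rule_format, OF bab u] unfolding brk .
      then show ?thesis using True by simp
    next
      case False
      then have "n \<ge> 1" by simp
      then show ?thesis using E5[rule_format, of n u] u unfolding brk by simp
    qed
    have "pgf (\<lambda>n. (1 - lam) * p n b 1 + lam * (\<Sum>i=1..n. g i * p (n - i) b 1)) x
        = pgf (\<lambda>n. br (n + b)) x * pgf (s b) (complex_of_real (1 - lam) + complex_of_real lam * pgf g x)"
      by (rule GF_iter[of "\<lambda>n u. p n b u", OF pS[OF bab] pnn[OF bab] g0 g(2) gsum g1 _ _ _ brbsum lam0 xy(1) rec])
         (use sr[OF bab] in auto)
    then show ?thesis unfolding Pp_def Kdef Cb_def by simp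
  qed

  have PpnE: "Ppn n = (1 - lam) * (\<Sum>m=a..b. p n m 1) + lam * (\<Sum>i=1..n. g i * (\<Sum>m=a..b. p (n - i) m 1))" for n
  proof -
    have sw: "(\<Sum>m=a..b. \<Sum>i=1..n. g i * p (n - i) m 1) = (\<Sum>i=1..n. g i * (\<Sum>m=a..b. p (n - i) m 1))"
      by (subst sum.swap) (simp add: sum_distrib_left)
    have "Ppn n = (\<Sum>m=a..b. (1 - lam) * p n m 1) + (\<Sum>m=a..b. lam * (\<Sum>i=1..n. g i * p (n - i) m 1))"
      unfolding Ppn_def Pp_def by (rule sum.distrib)
    also have "\<dots> = (1 - lam) * (\<Sum>m=a..b. p n m 1) + lam * (\<Sum>m=a..b. \<Sum>i=1..n. g i * p (n - i) m 1)"
      by (simp add: sum_distrib_left)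
    finally show ?thesis unfolding sw .
  qed
  have G3: "pgf Qq x = D * Hf lam g v x"
  proof -
    define ex where "ex n = (if n < a then Ppn n + real \<delta> * Qq n else 0)" for n
    have exa: "summable (\<lambda>n. \<bar>ex n\<bar>)"
      by (rule summable_finite[of "{..<a}"]) (auto simp: ex_def)
    have exs: "(\<lambda>n. complex_of_real (ex n) * x ^ n) sums D"
    proof -
      have "(\<lambda>n. complex_of_real (ex n) * x ^ n) sums (\<Sum>n\<in>{..<a}. complex_of_real (ex n) * x ^ n)"
        by (rule sums_finite) (auto simp: ex_def)
      moreover have "(\<Sum>n\<in>{..<a}. complex_of_real (ex n) * x ^ n) = D"
        unfolding D_def ex_def by (intro sum.cong) auto
      ultimately show ?thesis by simp
    qed
    have rec: "Q n u = (1 - lam) * Q n (u + 1) + lam * (\<Sum>i=1..n. g i * Q (n - i) (u + 1)) + v u * ex n"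
      if u: "u \<ge> 1" for n u
    proof (cases "n < a")
      case False
      then show ?thesis using E8[rule_format, of n u] u by (simp add: ex_def)
    next
      case na: True
      show ?thesis
      proof (cases "n = 0")
        case True
        have "v u * ex 0 = (1 - lam) * ((\<Sum>m=a..b. p 0 m 1) + real \<delta> * Q 0 1) * v u"
          using na True unfolding ex_def PpnE Qq_def by (simp add: algebra_simps)
        then have "Q 0 u = (1 - lam) * Q 0 (u + 1) + v u * ex 0" using E6[rule_format, OF u] by linarith
        then show ?thesis using True by simp
      next
        case False
        then have n1: "n \<in> {1..a-1}" using na by auto
        have d: "(\<Sum>i=1..n. g i * ((\<Sum>m=a..b. p (n - i) m 1) + real \<delta> * Q (n - i) 1))
            = (\<Sum>i=1..n. g i * (\<Sum>m=a..b. p (n - i) m 1)) + real \<delta> * (\<Sum>i=1..n. g i * Q (n - i) 1)"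
          by (simp add: distrib_left sum.distrib sum_distrib_left mult_ac)
        have "v u * ex n = v u * ((1 - lam) * ((\<Sum>m=a..b. p n m 1) + real \<delta> * Q n 1)
                 + lam * (\<Sum>i=1..n. g i * ((\<Sum>m=a..b. p (n - i) m 1) + real \<delta> * Q (n - i) 1)))"
          using na unfolding ex_def PpnE Qq_def d by (simp add: algebra_simps)
        then show ?thesis using E7[rule_format, OF n1 u] by linarith
      qed
    qed
    have "pgf (\<lambda>n. (1 - lam) * Q n 1 + lam * (\<Sum>i=1..n. g i * Q (n - i) 1)) x
        = pgf ex x * pgf v (complex_of_real (1 - lam) + complex_of_real lam * pgf g x)"
      by (rule GF_iter[of Q, OF N(2) Qnn g0 g(2) gsum g1 _ v(2) vsum exa lam0 xy(1) rec]) (use v(1) in auto)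
    moreover have "pgf ex x = D" by (rule pgf_eq[OF exs])
    ultimately show ?thesis unfolding Qq_def Hdef by simp
  qed

  have PpS: "(\<lambda>n. complex_of_real (Pp n r) * x ^ n) sums pgf (\<lambda>n. Pp n r) x" if r: "r \<in> {a..b}" for r
  proof -
    have "summable (\<lambda>n. \<bar>Pp n r\<bar>)" using Ppsum[OF r] by (simp add: abs_of_nonneg)
    then show ?thesis by (rule pgf_summ(3)[OF _ xy(1)])
  qed
  have QqS: "(\<lambda>n. complex_of_real (Qq n) * x ^ n) sums pgf Qq x"
  proof -
    have "summable (\<lambda>n. \<bar>Qq n\<bar>)" using Qqsum by (simp add: abs_of_nonneg)
    then show ?thesis by (rule pgf_summ(3)[OF _ xy(1)])
  qed
  have ellS: "(\<lambda>n. complex_of_real (ell n) * x ^ n) sums pgf ell x"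
  proof -
    have "summable (\<lambda>n. \<bar>ell n\<bar>)" using ellsum by (simp add: abs_of_nonneg)
    then show ?thesis by (rule pgf_summ(3)[OF _ xy(1)])
  qed
  define Pi where "Pi = (\<Sum>r=a..b. pgf (\<lambda>n. Pp n r) x) + pgf Qq x"
  have brS: "(\<lambda>n. complex_of_real (br n) * x ^ n) sums (Pi + pgf ell x)"
  proof -
    have "(\<lambda>n. \<Sum>r=a..b. complex_of_real (Pp n r) * x ^ n) sums (\<Sum>r=a..b. pgf (\<lambda>n. Pp n r) x)"
      by (rule sums_sum) (use PpS in auto)
    from sums_add[OF sums_add[OF this QqS] ellS]
    have "(\<lambda>n. (\<Sum>r=a..b. complex_of_real (Pp n r) * x ^ n) + complex_of_real (Qq n) * x ^ n + complex_of_real (ell n) * x ^ n)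
        sums (Pi + pgf ell x)" unfolding Pi_def .
    moreover have "(\<Sum>r=a..b. complex_of_real (Pp n r) * x ^ n) + complex_of_real (Qq n) * x ^ n + complex_of_real (ell n) * x ^ n
        = complex_of_real (br n) * x ^ n" for n
      unfolding br_def Ppn_def by (simp add: sum_distrib_right distrib_right)
    ultimately show ?thesis by simp
  qed
  have h1: "x ^ b * Cb = Pi + pgf ell x - (\<Sum>n<b. (complex_of_real (Ppn n) + complex_of_real (Qq n) + complex_of_real (ell n)) * x ^ n)"
  proof -
    have sh: "(\<lambda>n. complex_of_real (br (n + b)) * x ^ (n + b)) sums (Pi + pgf ell x - (\<Sum>n<b. complex_of_real (br n) * x ^ n))"
      using sums_iff_shift[of "\<lambda>n. complex_of_real (br n) * x ^ n" b] brS by simp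
    have "(\<lambda>n. complex_of_real (br (n + b)) * x ^ n) sums Cb" unfolding Cb_def by (rule pgf_summ(3)[OF brbsum xy(1)])
    from sums_mult[OF this, of "x ^ b"]
    have cb: "(\<lambda>n. complex_of_real (br (n + b)) * x ^ (n + b)) sums (x ^ b * Cb)"
      by (simp add: power_add mult_ac)
    have "x ^ b * Cb = Pi + pgf ell x - (\<Sum>n<b. complex_of_real (br n) * x ^ n)" by (rule sums_unique2[OF cb sh])
    then show ?thesis unfolding br_def by simp
  qed
  have insb: "{a..b} = insert b {a..<b}" using ab by auto
  have h2: "Pi = (\<Sum>r=a..<b. (complex_of_real (Ppn r) + complex_of_real (Qq r) + complex_of_real (ell r)) * Kf lam g s r x)
      + Cb * Kf lam g s b x + D * Hf lam g v x"
  proof -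
    have "(\<Sum>r=a..b. pgf (\<lambda>n. Pp n r) x) = pgf (\<lambda>n. Pp n b) x + (\<Sum>r=a..<b. pgf (\<lambda>n. Pp n r) x)"
      unfolding insb by (rule sum.insert) auto
    also have "(\<Sum>r=a..<b. pgf (\<lambda>n. Pp n r) x) = (\<Sum>r=a..<b. (complex_of_real (Ppn r) + complex_of_real (Qq r) + complex_of_real (ell r)) * Kf lam g s r x)"
      by (intro sum.cong refl) (simp add: G1 br_def)
    finally show ?thesis unfolding Pi_def G2 G3 by (simp add: algebra_simps)
  qed
  have h3: "D = (\<Sum>n<a. (complex_of_real (Ppn n) + of_nat \<delta> * complex_of_real (Qq n)) * x ^ n)"
    unfolding D_def by simp
  have h5: "complex_of_real (ell r) = (\<Sum>i<a. complex_of_real (g (r - i)) * complex_of_real (L i))" for r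
    unfolding ell_def by simp

  define Wc where "Wc j = (\<Sum>k. complex_of_real (g (k + (b + 1 - j))) * x ^ (k + (b + 1 - j) + j))" for j
  have h4: "pgf ell x - (\<Sum>n<b. complex_of_real (ell n) * x ^ n)
      = (\<Sum>i<a. complex_of_real (L i) * (complex_of_real (g (b - i)) * x ^ b + Wc i))"
  proof -
    have sh: "(\<lambda>n. complex_of_real (ell (n + b)) * x ^ (n + b)) sums (pgf ell x - (\<Sum>n<b. complex_of_real (ell n) * x ^ n))"
      using sums_iff_shift[of "\<lambda>n. complex_of_real (ell n) * x ^ n" b] ellS by simp
    have fi: "(\<lambda>n. complex_of_real (L i) * (complex_of_real (g (n + b - i)) * x ^ (n + b)))
        sums (complex_of_real (L i) * (complex_of_real (g (b - i)) * x ^ b + Wc i))" if i: "i \<in> {..<a}" for i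
    proof -
      have ib: "i \<le> b" using i ab by auto
      have gsh: "summable (\<lambda>k. g (k + (b + 1 - i)))" using gsum summable_iff_shift[of g "b + 1 - i"] by simp
      have nb: "norm (complex_of_real (g (k + (b + 1 - i))) * x ^ (k + (b + 1 - i) + i)) \<le> g (k + (b + 1 - i))" for k
      proof -
        have "cmod x ^ (k + (b + 1 - i) + i) \<le> 1" using xy(1) by (simp add: power_le_one)
        then have "g (k + (b + 1 - i)) * cmod x ^ (k + (b + 1 - i) + i) \<le> g (k + (b + 1 - i)) * 1"
          using g0 by (intro mult_left_mono) auto
        moreover have "norm (complex_of_real (g (k + (b + 1 - i))) * x ^ (k + (b + 1 - i) + i))
            = \<bar>g (k + (b + 1 - i))\<bar> * cmod x ^ (k + (b + 1 - i) + i)"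
          by (metis norm_mult norm_of_real norm_power)
        moreover have "\<bar>g (k + (b + 1 - i))\<bar> = g (k + (b + 1 - i))" using g0 by simp
        ultimately show ?thesis by linarith
      qed
      have Ws: "summable (\<lambda>k. complex_of_real (g (k + (b + 1 - i))) * x ^ (k + (b + 1 - i) + i))"
        by (rule summable_comparison_test'[OF gsh, where N=0]) (rule nb)
      have W: "(\<lambda>k. complex_of_real (g (Suc k + b - i)) * x ^ (Suc k + b)) sums Wc i"
      proof -
        have "(\<lambda>k. complex_of_real (g (k + (b + 1 - i))) * x ^ (k + (b + 1 - i) + i)) sums Wc i"
          unfolding Wc_def using Ws by (rule summable_sums)
        moreover have "(\<lambda>k. complex_of_real (g (k + (b + 1 - i))) * x ^ (k + (b + 1 - i) + i))
            = (\<lambda>k. complex_of_real (g (Suc k + b - i)) * x ^ (Suc k + b))"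
        proof (rule ext)
          fix k
          have e1: "g (Suc k + b - i) = g (k + (b + 1 - i))" using ib by (intro arg_cong[of _ _ g]) simp
          have e2: "x ^ (Suc k + b) = x ^ (k + (b + 1 - i) + i)" using ib by (intro arg_cong[of _ _ "\<lambda>m. x ^ m"]) simp
          show "complex_of_real (g (k + (b + 1 - i))) * x ^ (k + (b + 1 - i) + i) = complex_of_real (g (Suc k + b - i)) * x ^ (Suc k + b)"
            by (simp only: e1 e2)
        qed
        ultimately show ?thesis by simp
      qed
      have "(\<lambda>n. complex_of_real (g (n + b - i)) * x ^ (n + b)) sums (Wc i + complex_of_real (g (0 + b - i)) * x ^ (0 + b))"
        using sums_Suc_iff[of "\<lambda>n. complex_of_real (g (n + b - i)) * x ^ (n + b)" "Wc i", THEN iffD1, OF W] .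
      from sums_mult[OF this, of "complex_of_real (L i)"] show ?thesis by (simp add: algebra_simps)
    qed
    have "(\<lambda>n. \<Sum>i<a. complex_of_real (L i) * (complex_of_real (g (n + b - i)) * x ^ (n + b)))
        sums (\<Sum>i<a. complex_of_real (L i) * (complex_of_real (g (b - i)) * x ^ b + Wc i))"
      by (rule sums_sum) (use fi in auto)
    moreover have "(\<Sum>i<a. complex_of_real (L i) * (complex_of_real (g (n + b - i)) * x ^ (n + b)))
        = complex_of_real (ell (n + b)) * x ^ (n + b)" for n
      unfolding ell_def by (simp add: sum_distrib_left sum_distrib_right mult_ac)
    ultimately have "(\<lambda>n. complex_of_real (ell (n + b)) * x ^ (n + b))
        sums (\<Sum>i<a. complex_of_real (L i) * (complex_of_real (g (b - i)) * x ^ b + Wc i))" by simp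
    from sums_unique2[OF sh this] show ?thesis .
  qed
  have recL: "L n = (\<Sum>i=1..n. g i * L (n - i)) + (1 - real \<delta>) * Qq n" if n: "n < a" for n
  proof (cases "\<delta> = 0")
    case False
    then have "\<delta> = 1" using delta by simp
    then show ?thesis unfolding L_def by simp
  next
    case d0: True
    show ?thesis
    proof (cases "n = 0")
      case True
      have "p0 0 = (1 - lam) * p0 0 + (1 - lam) * Q 0 1" using E1 d0 by simp
      then have "lam * p0 0 = (1 - lam) * Q 0 1" by (simp add: algebra_simps)
      then show ?thesis using True d0 unfolding L_def Qq_def by simp
    next
      case False
      then have n1: "n \<in> {1..a-1}" using n by auto
      have "p0 n = (1 - lam) * p0 n + lam * (\<Sum>i=1..n. g i * p0 (n - i)) + (1 - lam) * Q n 1 + lam * (\<Sum>i=1..n. g i * Q (n - i) 1)"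
        using E2 n1 d0 by simp
      then have "lam * p0 n = lam * (\<Sum>i=1..n. g i * p0 (n - i)) + Qq n" unfolding Qq_def by (simp add: algebra_simps)
      moreover have "(\<Sum>i=1..n. g i * L (n - i)) = lam * (\<Sum>i=1..n. g i * p0 (n - i))"
        unfolding L_def using d0 by (simp add: sum_distrib_left mult_ac)
      ultimately show ?thesis unfolding L_def using d0 by simp
    qed
  qed
  have h6: "complex_of_real (L j) = (1 - of_nat \<delta>) * (\<Sum>n\<le>j. complex_of_real (ecoef g j n) * complex_of_real (Qq n))"
    if j: "j < a" for j
  proof -
    have "L j = (\<Sum>n=0..j. wseq g (j - n) * ((1 - real \<delta>) * Qq n))"
      by (rule renewal[of a L g "\<lambda>n. (1 - real \<delta>) * Qq n", OF recL j])
    also have "\<dots> = (1 - real \<delta>) * (\<Sum>n\<le>j. ecoef g j n * Qq n)"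
    proof -
      have "(\<Sum>n=0..j. wseq g (j - n) * ((1 - real \<delta>) * Qq n)) = (\<Sum>n\<le>j. (1 - real \<delta>) * (ecoef g j n * Qq n))"
        unfolding atLeast0AtMost by (intro sum.cong refl) (simp add: ecoef_wseq del: ecoef.simps)
      then show ?thesis by (simp add: sum_distrib_left del: ecoef.simps)
    qed
    finally show ?thesis by simp
  qed

  have C: "(x ^ b - Kf lam g s b x) * ((\<Sum>r=a..<b. y ^ r * (complex_of_real (Ppn r) + complex_of_real (Qq r) + complex_of_real (ell r)) * Kf lam g s r x)
        + y ^ b * Cb * Kf lam g s b x)
      = NumG a b (of_nat \<delta>) (\<lambda>i. complex_of_real (g i)) (\<lambda>j n. complex_of_real (ecoef g j n)) Wc
          (\<lambda>i. Kf lam g s i x) (Hf lam g v x) x y (\<lambda>n. complex_of_real (Ppn n)) (\<lambda>n. complex_of_real (Qq n))"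
    by (rule core[where K="\<lambda>i. Kf lam g s i x" and G="\<lambda>i. complex_of_real (g i)" and W=Wc
          and P="\<lambda>n. complex_of_real (Ppn n)" and Qv="\<lambda>n. complex_of_real (Qq n)" and ell="\<lambda>n. complex_of_real (ell n)"
          and L="\<lambda>n. complex_of_real (L n)" and E="\<lambda>j n. complex_of_real (ecoef g j n)" and H="Hf lam g v x"
          and D=D and Cb=Cb and Pi=Pi and Lam="pgf ell x" and dl="of_nat \<delta>", OF ab h1 h2 h3 h4 h5 h6])
  define SS where "SS = (\<Sum>r=a..<b. y ^ r * (complex_of_real (Ppn r) + complex_of_real (Qq r) + complex_of_real (ell r)) * Kf lam g s r x)
        + y ^ b * Cb * Kf lam g s b x"
  define c where "c = complex_of_real (1 / TT)"
  have pp: "pplus lam g a b p Q n r = Pp n r / TT" for n r unfolding pplus_def Pp_def TT_def ..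
  have LS: "(\<lambda>n. \<Sum>r=a..b. complex_of_real (pplus lam g a b p Q n r) * x ^ n * y ^ r) sums (\<Sum>r=a..b. c * y ^ r * pgf (\<lambda>n. Pp n r) x)"
  proof (rule sums_sum)
    fix r assume r: "r \<in> {a..b}"
    from sums_mult[OF PpS[OF r], of "c * y ^ r"]
    have "(\<lambda>n. c * y ^ r * (complex_of_real (Pp n r) * x ^ n)) sums (c * y ^ r * pgf (\<lambda>n. Pp n r) x)" .
    moreover have "c * y ^ r * (complex_of_real (Pp n r) * x ^ n) = complex_of_real (pplus lam g a b p Q n r) * x ^ n * y ^ r" for n
      unfolding pp c_def by (simp add: divide_inverse mult_ac)
    ultimately show "(\<lambda>n. complex_of_real (pplus lam g a b p Q n r) * x ^ n * y ^ r) sums (c * y ^ r * pgf (\<lambda>n. Pp n r) x)"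
      by simp
  qed
  have SSeq: "(\<Sum>r=a..b. c * y ^ r * pgf (\<lambda>n. Pp n r) x) = c * SS"
  proof -
    have "(\<Sum>r=a..b. c * y ^ r * pgf (\<lambda>n. Pp n r) x) = c * y ^ b * pgf (\<lambda>n. Pp n b) x + (\<Sum>r=a..<b. c * y ^ r * pgf (\<lambda>n. Pp n r) x)"
      unfolding insb by (rule sum.insert) auto
    also have "(\<Sum>r=a..<b. c * y ^ r * pgf (\<lambda>n. Pp n r) x)
        = c * (\<Sum>r=a..<b. y ^ r * (complex_of_real (Ppn r) + complex_of_real (Qq r) + complex_of_real (ell r)) * Kf lam g s r x)"
      unfolding sum_distrib_left by (intro sum.cong refl) (simp add: G1 br_def mult_ac)
    finally show ?thesis unfolding SS_def G2 by (simp add: algebra_simps)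
  qed
  have pn: "complex_of_real (pplusn lam g a b p Q n) = c * complex_of_real (Ppn n)" for n
    unfolding pplusn_def pp Ppn_def c_def by (simp add: sum_divide_distrib[symmetric] divide_inverse mult_ac sum_distrib_left)
  have qn: "complex_of_real (Qplus lam g a b p Q n) = c * complex_of_real (Qq n)" for n
    unfolding Qplus_def Qq_def TT_def c_def by (simp add: divide_inverse mult_ac)
  have nz: "x ^ b - Kf lam g s b x \<noteq> 0" using xy(3) by simp
  have val: "c * SS = NumG a b (of_nat \<delta>) (\<lambda>i. complex_of_real (g i)) (\<lambda>j n. complex_of_real (ecoef g j n)) Wc
          (\<lambda>i. Kf lam g s i x) (Hf lam g v x) x y (\<lambda>n. complex_of_real (pplusn lam g a b p Q n)) (\<lambda>n. complex_of_real (Qplus lam g a b p Q n))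
        / (x ^ b - Kf lam g s b x)"
    unfolding pn qn NumG_scale C[folded SS_def, symmetric] using nz by simp
  have "(\<lambda>n. \<Sum>r=a..b. complex_of_real (pplus lam g a b p Q n r) * x ^ n * y ^ r) sums
      (NumG a b (of_nat \<delta>) (\<lambda>i. complex_of_real (g i)) (\<lambda>j n. complex_of_real (ecoef g j n)) Wc
          (\<lambda>i. Kf lam g s i x) (Hf lam g v x) x y (\<lambda>n. complex_of_real (pplusn lam g a b p Q n)) (\<lambda>n. complex_of_real (Qplus lam g a b p Q n))
        / (x ^ b - Kf lam g s b x))"
    using LS unfolding SSeq val .
  then show ?thesis unfolding NumG_def Wc_def .
qed

end
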